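(* Let $\mathcal{H}$ be a real Hilbert space with orthonormal basis $(\varphi_\gamma)_{\gamma\in\Gamma}$, let $g\in\mathcal{H}$, let $n\in\mathbb{N}$, and for $1\le i\le n$ let $1\le p_i\le 2$ and let $W_i=(w_{i,\gamma})_{\gamma\in\Gamma}$ be a sequence of strictly positive weights. Define $$\Phi:\mathcal{H}\to\mathbb{R}\cup\{+\infty\},\qquad \Phi(f)=\|f-g\|_{\mathcal{H}}^2+\sum_{i=1}^n |||f|||_{W_i,p_i}^{p_i},\qquad |||f|||_{W_i,p_i}=\Big(\sum_{\gamma\in\Gamma}w_{i,\gamma}|\langle f,\varphi_\gamma\rangle|^{p_i}\Big)^{1/p_i}.$$ For each $\gamma\in\Gamma$, write $g_\gamma=\langle g,\varphi_\gamma\rangle$ and let $S_{(w_{1,\gamma},\dots,w_{n,\gamma}),(p_1,\dots,p_n)}(g_\gamma)$ denote the minimizer of the function $M_\gamma:\mathbb{R}\to\mathbb{R}$, $M_\gamma(x)=x^2+g_\gamma^2-2g_\gamma x+w_{1,\gamma}|x|^{p_1}+\dots+w_{n,\gamma}|x|^{p_n}$. Then $$f_m=\sum_{\gamma\in\Gamma}S_{(w_{1,\gamma},\dots,w_{n,\gamma}),(p_1,\dots,p_n)}(g_\gamma)\,\varphi_\gamma$$ is a minimizer of $\Phi$.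
   Context: Inner products $\langle f,\varphi_\gamma\rangle$ are real. *)

theory Defs
  imports "HOL-Analysis.Analysis"
begin

definition orthonormal_basis :: "'g set \<Rightarrow> ('g \<Rightarrow> 'a::real_inner) \<Rightarrow> bool" where
  "orthonormal_basis \<Gamma> \<phi> \<longleftrightarrow>
     (\<forall>i\<in>\<Gamma>. \<forall>j\<in>\<Gamma>. inner (\<phi> i) (\<phi> j) = (if i = j then 1 else 0)) \<and>
     closure (span (\<phi> ` \<Gamma>)) = UNIV"

definition wnorm_pow :: "'g set \<Rightarrow> ('g \<Rightarrow> 'a::real_inner) \<Rightarrow> ('g \<Rightarrow> real) \<Rightarrow> real \<Rightarrow> 'a \<Rightarrow> ennreal" where
  "wnorm_pow \<Gamma> \<phi> w p f = (\<Sum>\<^sub>\<infinity>\<gamma>\<in>\<Gamma>. ennreal (w \<gamma> * \<bar>inner f (\<phi> \<gamma>)\<bar> powr p))"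

definition Phi :: "'g set \<Rightarrow> ('g \<Rightarrow> 'a::real_inner) \<Rightarrow> 'a \<Rightarrow> nat \<Rightarrow> (nat \<Rightarrow> 'g \<Rightarrow> real)
                   \<Rightarrow> (nat \<Rightarrow> real) \<Rightarrow> 'a \<Rightarrow> ennreal" where
  "Phi \<Gamma> \<phi> g n w p f = ennreal ((norm (f - g))\<^sup>2) + (\<Sum>i\<in>{1..n}. wnorm_pow \<Gamma> \<phi> (w i) (p i) f)"

definition Mfun :: "nat \<Rightarrow> (nat \<Rightarrow> real) \<Rightarrow> (nat \<Rightarrow> real) \<Rightarrow> real \<Rightarrow> real \<Rightarrow> real" where
  "Mfun n ws p y x = x\<^sup>2 + y\<^sup>2 - 2 * y * x + (\<Sum>i\<in>{1..n}. ws i * \<bar>x\<bar> powr p i)"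

definition Smin :: "nat \<Rightarrow> (nat \<Rightarrow> real) \<Rightarrow> (nat \<Rightarrow> real) \<Rightarrow> real \<Rightarrow> real" where
  "Smin n ws p y = (THE x. \<forall>z. Mfun n ws p y x \<le> Mfun n ws p y z)"

end

theory Submission
  imports Defs
begin


definition ortho :: "'g set \<Rightarrow> ('g \<Rightarrow> 'a::real_inner) \<Rightarrow> bool" where
  "ortho \<Gamma> \<phi> \<longleftrightarrow> (\<forall>i\<in>\<Gamma>. \<forall>j\<in>\<Gamma>. inner (\<phi> i) (\<phi> j) = (if i = j then 1 else 0))"

lemma fin_inner:
  assumes on: "ortho \<Gamma> \<phi>" and F: "finite F" "F \<subseteq> \<Gamma>" and d: "\<delta> \<in> \<Gamma>"
  shows "inner (\<Sum>\<gamma>\<in>F. c \<gamma> *\<^sub>R \<phi> \<gamma>) (\<phi> \<delta>) = (if \<delta> \<in> F then c \<delta> else 0)"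
proof -
  have "inner (\<Sum>\<gamma>\<in>F. c \<gamma> *\<^sub>R \<phi> \<gamma>) (\<phi> \<delta>) = (\<Sum>\<gamma>\<in>F. c \<gamma> * inner (\<phi> \<gamma>) (\<phi> \<delta>))"
    by (simp add: inner_sum_left)
  also have "\<dots> = (\<Sum>\<gamma>\<in>F. if \<gamma> = \<delta> then c \<delta> else 0)"
    using on F d unfolding ortho_def by (intro sum.cong) auto
  also have "\<dots> = (if \<delta> \<in> F then c \<delta> else 0)"
    using F by (simp add: sum.delta)
  finally show ?thesis .
qed

lemma fin_norm:
  assumes on: "ortho \<Gamma> \<phi>" and F: "finite F" "F \<subseteq> \<Gamma>"
  shows "(norm (\<Sum>\<gamma>\<in>F. c \<gamma> *\<^sub>R \<phi> \<gamma>))\<^sup>2 = (\<Sum>\<gamma>\<in>F. (c \<gamma>)\<^sup>2)"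
proof -
  let ?s = "\<Sum>\<gamma>\<in>F. c \<gamma> *\<^sub>R \<phi> \<gamma>"
  have "(norm ?s)\<^sup>2 = (\<Sum>\<gamma>\<in>F. c \<gamma> * inner (\<phi> \<gamma>) ?s)"
    by (simp add: power2_norm_eq_inner inner_sum_left)
  also have "\<dots> = (\<Sum>\<gamma>\<in>F. (c \<gamma>)\<^sup>2)"
  proof (intro sum.cong refl)
    fix \<gamma> assume "\<gamma> \<in> F"
    then show "c \<gamma> * inner (\<phi> \<gamma>) ?s = (c \<gamma>)\<^sup>2"
      using fin_inner[OF on F, of \<gamma> c] F by (auto simp: inner_commute power2_eq_square)
  qed
  finally show ?thesis .
qed

lemma summable_coeffs:
  fixes \<phi> :: "'g \<Rightarrow> 'a::{real_inner, complete_space}"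
  assumes on: "ortho \<Gamma> \<phi>" and sq: "(\<lambda>\<gamma>. (c \<gamma>)\<^sup>2) summable_on \<Gamma>"
  shows "(\<lambda>\<gamma>. c \<gamma> *\<^sub>R \<phi> \<gamma>) summable_on \<Gamma>"
proof -
  define f where "f = (\<lambda>\<gamma>. c \<gamma> *\<^sub>R \<phi> \<gamma>)"
  from sq obtain L where lim: \<open>(sum (\<lambda>x. (c x)\<^sup>2) \<longlongrightarrow> L) (finite_subsets_at_top \<Gamma>)\<close>
    unfolding has_sum_def summable_on_def by blast
  have \<open>\<exists>P. eventually P (finite_subsets_at_top \<Gamma>) \<and>
              (\<forall>F F'. P F \<and> P F' \<longrightarrow> dist (sum f F) (sum f F') < e)\<close> if \<open>e>0\<close> for e
  proof -
    define d P where \<open>d = e\<^sup>2/32\<close> and \<open>P F \<longleftrightarrow> finite F \<and> F \<subseteq> \<Gamma> \<and> dist (sum (\<lambda>x. (c x)\<^sup>2) F) L < d\<close> for F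
    have \<open>d > 0\<close>
      unfolding d_def using that by simp
    have ev_P: \<open>eventually P (finite_subsets_at_top \<Gamma>)\<close>
      using lim
      by (auto simp add: P_def[abs_def] \<open>0 < d\<close> eventually_conj_iff eventually_finite_subsets_at_top_weakI tendsto_iff)
    moreover have \<open>dist (sum f F1) (sum f F2) < e\<close> if \<open>P F1\<close> and \<open>P F2\<close> for F1 F2
    proof -
      from ev_P
      obtain F' where \<open>finite F'\<close> and \<open>F' \<subseteq> \<Gamma>\<close> and P_sup_F': \<open>finite F \<and> F \<supseteq> F' \<and> F \<subseteq> \<Gamma> \<Longrightarrow> P F\<close> for F
        by atomize_elim (simp add: eventually_finite_subsets_at_top)
      define F where \<open>F = F' \<union> F1 \<union> F2\<close>
      have \<open>finite F\<close> and \<open>F \<subseteq> \<Gamma>\<close>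
        using F_def P_def[abs_def] that \<open>finite F'\<close> \<open>F' \<subseteq> \<Gamma>\<close> by auto
      have dist_F: \<open>dist (sum (\<lambda>x. (c x)\<^sup>2) F) L < d\<close>
        by (metis F_def \<open>F \<subseteq> \<Gamma>\<close> P_def P_sup_F' \<open>finite F\<close> le_supE order_refl)
      have dist_F_subset: \<open>dist (sum f F) (sum f F') \<le> e/4\<close> if F': \<open>F' \<subseteq> F\<close> \<open>P F'\<close> for F'
      proof -
        have fin': "finite F'" using F' \<open>finite F\<close> finite_subset by blast
        have \<open>dist (sum f F) (sum f F') = norm (sum f (F-F'))\<close>
          unfolding dist_norm using \<open>finite F\<close> F' by (subst sum_diff) auto
        moreover have "(norm (sum f (F-F')))\<^sup>2 = sum (\<lambda>x. (c x)\<^sup>2) (F - F')"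
          unfolding f_def using \<open>finite F\<close> \<open>F \<subseteq> \<Gamma>\<close> by (intro fin_norm[OF on]) auto
        moreover have "sum (\<lambda>x. (c x)\<^sup>2) (F - F') = sum (\<lambda>x. (c x)\<^sup>2) F - sum (\<lambda>x. (c x)\<^sup>2) F'"
          using \<open>finite F\<close> F' by (subst sum_diff) auto
        moreover have "dist (sum (\<lambda>x. (c x)\<^sup>2) F') L < d" using F' P_def by auto
        ultimately have A: "(dist (sum f F) (sum f F'))\<^sup>2 = sum (\<lambda>x. (c x)\<^sup>2) F - sum (\<lambda>x. (c x)\<^sup>2) F'"
          and B: "dist (sum (\<lambda>x. (c x)\<^sup>2) F') L < d" by auto
        have "sum (\<lambda>x. (c x)\<^sup>2) F - sum (\<lambda>x. (c x)\<^sup>2) F' < 2 * d"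
          using B dist_F unfolding dist_real_def by (simp add: abs_less_iff)
        also have "2 * d = (e/4)\<^sup>2" unfolding d_def by (simp add: power2_eq_square)
        finally have "(dist (sum f F) (sum f F'))\<^sup>2 \<le> (e/4)\<^sup>2" using A by simp
        then show ?thesis
          using \<open>e > 0\<close> by (simp add: power2_le_iff_abs_le)
      qed
      have \<open>dist (sum f F1) (sum f F2) \<le> dist (sum f F) (sum f F1) + dist (sum f F) (sum f F2)\<close>
        by (rule dist_triangle3)
      also have \<open>\<dots> \<le> e/4 + e/4\<close>
        by (intro add_mono dist_F_subset that) (auto simp: F_def)
      also have \<open>\<dots> < e\<close>
        using \<open>e>0\<close> by auto
      finally show \<open>dist (sum f F1) (sum f F2) < e\<close> .
    qed
    ultimately show ?thesis
      by blast
  qed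
  then have \<open>cauchy_filter (filtermap (sum f) (finite_subsets_at_top \<Gamma>))\<close>
    by (simp add: cauchy_filter_metric_filtermap)
  moreover have "complete (UNIV::'a set)"
    by (meson Cauchy_convergent UNIV_I complete_def convergent_def)
  ultimately obtain L' where \<open>(sum f \<longlongrightarrow> L') (finite_subsets_at_top \<Gamma>)\<close>
    using complete_uniform[where S=UNIV] by (force simp add: filterlim_def)
  then show ?thesis
    using summable_on_def has_sum_def f_def by blast
qed


lemma coeff_has_sum:
  assumes on: "ortho \<Gamma> \<phi>" and d: "\<delta> \<in> \<Gamma>"
  shows "((\<lambda>\<gamma>. inner (c \<gamma> *\<^sub>R \<phi> \<gamma>) (\<phi> \<delta>)) has_sum c \<delta>) \<Gamma>"
  by (rule has_sum_finite_neutralI[where B="{\<delta>}"]) (use on d in \<open>auto simp: ortho_def\<close>)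

lemma coeff:
  assumes on: "ortho \<Gamma> \<phi>" and s: "(\<lambda>\<gamma>. c \<gamma> *\<^sub>R \<phi> \<gamma>) summable_on \<Gamma>" and d: "\<delta> \<in> \<Gamma>"
  shows "inner (\<Sum>\<^sub>\<infinity>\<gamma>\<in>\<Gamma>. c \<gamma> *\<^sub>R \<phi> \<gamma>) (\<phi> \<delta>) = c \<delta>"
proof -
  have "((\<lambda>\<gamma>. inner (c \<gamma> *\<^sub>R \<phi> \<gamma>) (\<phi> \<delta>)) has_sum inner (\<Sum>\<^sub>\<infinity>\<gamma>\<in>\<Gamma>. c \<gamma> *\<^sub>R \<phi> \<gamma>) (\<phi> \<delta>)) \<Gamma>"
    by (rule has_sum_bounded_linear[OF bounded_linear_inner_left]) (use s in simp)
  then show ?thesis using coeff_has_sum[OF on d] has_sum_unique by blast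
qed

lemma norm_sq:
  assumes on: "ortho \<Gamma> \<phi>" and s: "(\<lambda>\<gamma>. c \<gamma> *\<^sub>R \<phi> \<gamma>) summable_on \<Gamma>"
  shows "((\<lambda>\<gamma>. (c \<gamma>)\<^sup>2) has_sum (norm (\<Sum>\<^sub>\<infinity>\<gamma>\<in>\<Gamma>. c \<gamma> *\<^sub>R \<phi> \<gamma>))\<^sup>2) \<Gamma>"
proof -
  define S where "S = (\<Sum>\<^sub>\<infinity>\<gamma>\<in>\<Gamma>. c \<gamma> *\<^sub>R \<phi> \<gamma>)"
  have "((\<lambda>\<gamma>. inner (c \<gamma> *\<^sub>R \<phi> \<gamma>) S) has_sum inner S S) \<Gamma>"
    unfolding S_def by (rule has_sum_bounded_linear[OF bounded_linear_inner_left]) (use s in simp)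
  moreover have "inner (c \<gamma> *\<^sub>R \<phi> \<gamma>) S = (c \<gamma>)\<^sup>2" if "\<gamma> \<in> \<Gamma>" for \<gamma>
    using coeff[OF on s that] unfolding S_def by (simp add: inner_commute power2_eq_square)
  ultimately have "((\<lambda>\<gamma>. (c \<gamma>)\<^sup>2) has_sum inner S S) \<Gamma>"
    using has_sum_cong[of \<Gamma> "\<lambda>\<gamma>. inner (c \<gamma> *\<^sub>R \<phi> \<gamma>) S" "\<lambda>\<gamma>. (c \<gamma>)\<^sup>2"] by blast
  moreover have "inner S S = (norm S)\<^sup>2" by (rule power2_norm_eq_inner[symmetric])
  ultimately show ?thesis unfolding S_def by simp
qed

lemma bessel_fin:
  assumes on: "ortho \<Gamma> \<phi>" and F: "finite F" "F \<subseteq> \<Gamma>"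
  shows "(\<Sum>\<gamma>\<in>F. (inner x (\<phi> \<gamma>))\<^sup>2) \<le> (norm x)\<^sup>2"
proof -
  define s where "s = (\<Sum>\<gamma>\<in>F. inner x (\<phi> \<gamma>) *\<^sub>R \<phi> \<gamma>)"
  have xs: "inner x s = (\<Sum>\<gamma>\<in>F. (inner x (\<phi> \<gamma>))\<^sup>2)"
    unfolding s_def by (simp add: inner_sum_right power2_eq_square)
  have ss: "inner s s = (\<Sum>\<gamma>\<in>F. (inner x (\<phi> \<gamma>))\<^sup>2)"
    using fin_norm[OF on F, of "\<lambda>\<gamma>. inner x (\<phi> \<gamma>)"] unfolding s_def by (simp add: power2_norm_eq_inner)
  have "0 \<le> inner (x - s) (x - s)" by simp
  also have "\<dots> = inner x x - 2 * inner x s + inner s s"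
    by (simp add: inner_diff_left inner_diff_right inner_commute)
  finally show ?thesis using xs ss by (simp add: power2_norm_eq_inner)
qed

lemma bessel:
  assumes on: "ortho \<Gamma> \<phi>"
  shows "(\<lambda>\<gamma>. (inner x (\<phi> \<gamma>))\<^sup>2) summable_on \<Gamma>"
  apply (rule nonneg_bdd_above_summable_on)
   apply simp
  apply (rule bdd_aboveI[where M="(norm x)\<^sup>2"])
  using bessel_fin[OF on] by auto

lemma expansion:
  fixes \<phi> :: "'g \<Rightarrow> 'a::{real_inner, complete_space}"
  assumes onb: "orthonormal_basis \<Gamma> \<phi>"
  shows "(\<lambda>\<gamma>. inner x (\<phi> \<gamma>) *\<^sub>R \<phi> \<gamma>) summable_on \<Gamma> \<and> x = (\<Sum>\<^sub>\<infinity>\<gamma>\<in>\<Gamma>. inner x (\<phi> \<gamma>) *\<^sub>R \<phi> \<gamma>)"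
proof -
  have on: "ortho \<Gamma> \<phi>" using onb unfolding orthonormal_basis_def ortho_def by blast
  have s: "(\<lambda>\<gamma>. inner x (\<phi> \<gamma>) *\<^sub>R \<phi> \<gamma>) summable_on \<Gamma>"
    by (rule summable_coeffs[OF on bessel[OF on]])
  define r where "r = x - (\<Sum>\<^sub>\<infinity>\<gamma>\<in>\<Gamma>. inner x (\<phi> \<gamma>) *\<^sub>R \<phi> \<gamma>)"
  have r0: "inner r (\<phi> \<delta>) = 0" if "\<delta> \<in> \<Gamma>" for \<delta>
    unfolding r_def inner_diff_left using coeff[OF on s that] by simp
  have sub: "subspace {y. inner r y = 0}"
    by (auto simp: subspace_def inner_add_right)
  have "span (\<phi> ` \<Gamma>) \<subseteq> {y. inner r y = 0}"
    by (rule span_minimal[OF _ sub]) (use r0 in auto)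
  moreover have "closed {y. inner r y = 0}"
    by (intro closed_Collect_eq continuous_intros)
  ultimately have "closure (span (\<phi> ` \<Gamma>)) \<subseteq> {y. inner r y = 0}"
    by (rule closure_minimal)
  then have "r \<in> {y. inner r y = 0}" using onb unfolding orthonormal_basis_def by blast
  then have "inner r r = 0" by simp
  then have "r = 0" by simp
  then show ?thesis using s unfolding r_def by simp
qed

lemma parseval:
  fixes \<phi> :: "'g \<Rightarrow> 'a::{real_inner, complete_space}"
  assumes onb: "orthonormal_basis \<Gamma> \<phi>"
  shows "((\<lambda>\<gamma>. (inner x (\<phi> \<gamma>))\<^sup>2) has_sum (norm x)\<^sup>2) \<Gamma>"
proof -
  have on: "ortho \<Gamma> \<phi>" using onb unfolding orthonormal_basis_def ortho_def by blast
  from expansion[OF onb, of x] norm_sq[OF on, of "\<lambda>\<gamma>. inner x (\<phi> \<gamma>)"] show ?thesis by simp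
qed



lemma powr_mid:
  fixes s t q :: real
  assumes q: "q \<ge> 1" and s: "s \<ge> 0" and t: "t \<ge> 0"
  shows "((s + t) / 2) powr q \<le> (s powr q + t powr q) / 2"
proof -
  have one: "(u / 2) powr q \<le> u powr q / 2" if u: "u \<ge> 0" for u :: real
  proof -
    have "(u / 2) powr q = u powr q / 2 powr q" using u by (simp add: powr_divide)
    moreover have "2 \<le> (2::real) powr q"
      using powr_mono[OF q, of 2] by simp
    moreover have "u powr q / 2 powr q \<le> u powr q / 2"
      using \<open>2 \<le> 2 powr q\<close> by (intro divide_left_mono) auto
    ultimately show ?thesis by simp
  qed
  show ?thesis
  proof (cases "s > 0 \<and> t > 0")
    case True
    have "((1 - 1/2) *\<^sub>R s + (1/2) *\<^sub>R t) powr q \<le> (1 - 1/2) * s powr q + (1/2) * t powr q"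
      using convex_onD[OF powr_convex[OF q], of "1/2" s t] True by simp
    then show ?thesis by (simp add: field_simps)
  next
    case False
    then have "s = 0 \<or> t = 0" using s t by auto
    then show ?thesis
      using one[OF s] one[OF t] q by auto
  qed
qed

lemma abs_powr_mid:
  fixes a b q :: real
  assumes q: "q \<ge> 1"
  shows "\<bar>(a + b) / 2\<bar> powr q \<le> (\<bar>a\<bar> powr q + \<bar>b\<bar> powr q) / 2"
proof -
  have "\<bar>(a + b) / 2\<bar> \<le> (\<bar>a\<bar> + \<bar>b\<bar>) / 2" by simp
  then have "\<bar>(a + b) / 2\<bar> powr q \<le> ((\<bar>a\<bar> + \<bar>b\<bar>) / 2) powr q"
    using q by (intro powr_mono2) auto
  also have "\<dots> \<le> (\<bar>a\<bar> powr q + \<bar>b\<bar> powr q) / 2"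
    using q by (intro powr_mid) auto
  finally show ?thesis .
qed

lemma Mfun_alt: "Mfun n ws p y x = (x - y)\<^sup>2 + (\<Sum>i\<in>{1..n}. ws i * \<bar>x\<bar> powr p i)"
  unfolding Mfun_def by (simp add: power2_diff algebra_simps)

lemma pen_mono:
  fixes ws p :: "nat \<Rightarrow> real" and a b :: real
  assumes h: "\<And>i. i \<in> {1..n} \<Longrightarrow> ws i > 0 \<and> 1 \<le> p i" and ab: "\<bar>a\<bar> \<le> \<bar>b\<bar>"
  shows "(\<Sum>i\<in>{1..n}. ws i * \<bar>a\<bar> powr p i) \<le> (\<Sum>i\<in>{1..n}. ws i * \<bar>b\<bar> powr p i)"
proof (rule sum_mono)
  fix i assume i: "i \<in> {1..n}"
  have "\<bar>a\<bar> powr p i \<le> \<bar>b\<bar> powr p i" using h[OF i] ab by (intro powr_mono2) auto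
  then show "ws i * \<bar>a\<bar> powr p i \<le> ws i * \<bar>b\<bar> powr p i"
    using h[OF i] by (intro mult_left_mono) auto
qed

lemma pen_mid:
  fixes ws p :: "nat \<Rightarrow> real" and a b :: real
  assumes h: "\<And>i. i \<in> {1..n} \<Longrightarrow> ws i > 0 \<and> 1 \<le> p i"
  shows "(\<Sum>i\<in>{1..n}. ws i * \<bar>(a + b) / 2\<bar> powr p i)
     \<le> ((\<Sum>i\<in>{1..n}. ws i * \<bar>a\<bar> powr p i) + (\<Sum>i\<in>{1..n}. ws i * \<bar>b\<bar> powr p i)) / 2"
proof -
  have "(\<Sum>i\<in>{1..n}. ws i * \<bar>(a + b) / 2\<bar> powr p i)
      \<le> (\<Sum>i\<in>{1..n}. ws i * ((\<bar>a\<bar> powr p i + \<bar>b\<bar> powr p i) / 2))"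
  proof (rule sum_mono)
    fix i assume i: "i \<in> {1..n}"
    show "ws i * \<bar>(a + b) / 2\<bar> powr p i \<le> ws i * ((\<bar>a\<bar> powr p i + \<bar>b\<bar> powr p i) / 2)"
      using h[OF i] abs_powr_mid[of "p i" a b] by (intro mult_left_mono) auto
  qed
  also have "\<dots> = ((\<Sum>i\<in>{1..n}. ws i * \<bar>a\<bar> powr p i) + (\<Sum>i\<in>{1..n}. ws i * \<bar>b\<bar> powr p i)) / 2"
    by (simp add: sum_divide_distrib[symmetric] sum.distrib[symmetric] algebra_simps)
  finally show ?thesis .
qed

lemma M_cont:
  assumes h: "\<And>i. i \<in> {1..n} \<Longrightarrow> ws i > 0 \<and> 1 \<le> p i"
  shows "continuous_on A (Mfun n ws p y)"
proof -
  have c: "continuous_on A (\<lambda>x. \<bar>x\<bar> powr p i)" if i: "i \<in> {1..n}" for i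
    using h[OF i] by (intro continuous_on_powr' continuous_intros) auto
  show ?thesis
    unfolding Mfun_def[abs_def]
    by (intro continuous_intros continuous_on_sum continuous_on_mult c) auto
qed

lemma lin_aux:
  fixes d Pm Pb Px Mm Mb Mx S Sb Sx :: real
  shows "0 < d \<Longrightarrow> Pm \<le> (Pb + Px)/2 \<Longrightarrow> Mm = S + Pm \<Longrightarrow> Mb = Sb + Pb \<Longrightarrow> Mx = Sx + Px
    \<Longrightarrow> S = (Sb + Sx)/2 - d/4 \<Longrightarrow> Mm < (Mb + Mx)/2"
  by (simp add: field_simps)

lemma scalar_min:
  assumes h: "\<And>i. i \<in> {1..n} \<Longrightarrow> ws i > 0 \<and> 1 \<le> p i"
  shows "(\<forall>z. Mfun n ws p y (Smin n ws p y) \<le> Mfun n ws p y z) \<and> \<bar>Smin n ws p y\<bar> \<le> \<bar>y\<bar>"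
proof -
  let ?M = "Mfun n ws p y"
  let ?P = "\<lambda>x. (\<Sum>i\<in>{1..n}. ws i * \<bar>x\<bar> powr p i)"
  have M: "?M x = (x - y)\<^sup>2 + ?P x" for x by (rule Mfun_alt)
  have "\<exists>x\<in>{-\<bar>y\<bar>..\<bar>y\<bar>}. \<forall>z\<in>{-\<bar>y\<bar>..\<bar>y\<bar>}. ?M x \<le> ?M z"
    using M_cont[OF h, where A="{-\<bar>y\<bar>..\<bar>y\<bar>}" and y=y] by (intro continuous_attains_inf) auto
  then obtain x0 where x0: "x0 \<in> {-\<bar>y\<bar>..\<bar>y\<bar>}" and x0m: "\<forall>z\<in>{-\<bar>y\<bar>..\<bar>y\<bar>}. ?M x0 \<le> ?M z"
    by blast
  have clip: "\<exists>z'\<in>{-\<bar>y\<bar>..\<bar>y\<bar>}. ?M z' \<le> ?M z" for z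
  proof (cases "\<bar>z\<bar> \<le> \<bar>y\<bar>")
    case True then show ?thesis by (intro bexI[of _ z]) auto
  next
    case False
    have Py: "?P y \<le> ?P z" "?P (-y) \<le> ?P z" using False pen_mono[OF h] by auto
    show ?thesis
    proof (cases "z * y \<ge> 0")
      case True
      have "?M y \<le> ?M z" unfolding M using Py(1) by (simp add: add_increasing)
      then show ?thesis by (intro bexI[of _ y]) auto
    next
      case f2: False
      have zy: "\<bar>z * y\<bar> = -(z*y)" using f2 by simp
      have m: "\<bar>y\<bar> * \<bar>y\<bar> \<le> \<bar>z\<bar> * \<bar>y\<bar>" using False by (intro mult_right_mono) auto
      have yy: "\<bar>y\<bar> * \<bar>y\<bar> = y * y" by simp
      have zz: "y * y \<le> z * z" using False abs_le_square_iff[of y z] by (simp add: power2_eq_square)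
      have "(-y - y)\<^sup>2 = 4 * (y * y)" by (simp add: power2_eq_square algebra_simps)
      moreover have "(z - y)\<^sup>2 = z * z - 2 * (z * y) + y * y" by (simp add: power2_eq_square algebra_simps)
      moreover have "\<bar>z * y\<bar> = \<bar>z\<bar> * \<bar>y\<bar>" by (rule abs_mult)
      ultimately have "(-y - y)\<^sup>2 \<le> (z - y)\<^sup>2" using zy m yy zz by linarith
      then have "?M (-y) \<le> ?M z" unfolding M using Py(2) by (rule add_mono)
      then show ?thesis by (intro bexI[of _ "-y"]) auto
    qed
  qed
  have glob: "\<forall>z. ?M x0 \<le> ?M z"
    using clip x0m by (meson order_trans)
  have uniq: "b = x0" if b: "\<forall>z. ?M b \<le> ?M z" for b
  proof (rule ccontr)
    assume ne: "b \<noteq> x0"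
    have e1: "?M x0 \<le> ?M b" "?M b \<le> ?M x0" using b glob by blast+
    have sq: "((b + x0)/2 - y)\<^sup>2 = ((b - y)\<^sup>2 + (x0 - y)\<^sup>2)/2 - (b - x0)\<^sup>2/4"
      by (simp add: power2_eq_square field_simps)
    have "(b - x0)\<^sup>2 > 0" using ne by simp
    moreover have pm: "?P ((b + x0)/2) \<le> (?P b + ?P x0)/2"
      by (rule pen_mid[where ws=ws and p=p and n=n and a=b and b=x0, OF h])
    moreover have "?M ((b + x0)/2) = ((b + x0)/2 - y)\<^sup>2 + ?P ((b + x0)/2)" by (rule M)
    moreover have "?M b = (b - y)\<^sup>2 + ?P b" by (rule M)
    moreover have "?M x0 = (x0 - y)\<^sup>2 + ?P x0" by (rule M)
    ultimately have "?M ((b + x0)/2) < (?M b + ?M x0)/2"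
      using sq by (rule lin_aux)
    then have "?M ((b + x0)/2) < ?M x0" using e1 by (simp add: field_simps)
    then show False using glob by (meson not_le)
  qed
  have "Smin n ws p y = x0"
    unfolding Smin_def by (rule the_equality) (use glob uniq in blast)+
  then show ?thesis using glob x0 by auto
qed



lemma ennsum: "(f::'x \<Rightarrow> ennreal) summable_on S"
  by (rule nonneg_summable_on_complete) simp

lemma ennreal_infsum:
  fixes h :: "'g \<Rightarrow> real"
  assumes s: "h summable_on A" and nn: "\<And>x. x \<in> A \<Longrightarrow> h x \<ge> 0"
  shows "ennreal (infsum h A) = (\<Sum>\<^sub>\<infinity>x\<in>A. ennreal (h x))"
proof -
  have "infsum (ennreal \<circ> h) A = ennreal (infsum h A)"
  proof (rule infsum_comm_additive_general)
    fix F assume "finite F" "F \<subseteq> A"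
    then show "sum (ennreal \<circ> h) F = ennreal (sum h F)"
      using nn by (auto intro!: sum_ennreal)
  next
    show "isCont ennreal (infsum h A)"
      unfolding isCont_def by (intro tendsto_ennrealI tendsto_ident_at)
  qed (rule s)
  then show ?thesis by (simp add: o_def)
qed

lemma infsum_sum_ennreal:
  fixes f :: "nat \<Rightarrow> 'g \<Rightarrow> ennreal"
  assumes "finite I"
  shows "(\<Sum>\<^sub>\<infinity>x\<in>A. \<Sum>i\<in>I. f i x) = (\<Sum>i\<in>I. \<Sum>\<^sub>\<infinity>x\<in>A. f i x)"
  using assms
proof (induction I rule: finite_induct)
  case empty then show ?case by simp
next
  case (insert j I)
  have "(\<Sum>\<^sub>\<infinity>x\<in>A. f j x + (\<Sum>i\<in>I. f i x)) = (\<Sum>\<^sub>\<infinity>x\<in>A. f j x) + (\<Sum>\<^sub>\<infinity>x\<in>A. \<Sum>i\<in>I. f i x)"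
    by (rule infsum_add[OF ennsum ennsum])
  then show ?case using insert by simp
qed

lemma Phi_eq:
  fixes \<Gamma> :: "'g set" and \<phi> :: "'g \<Rightarrow> 'a::{real_inner, complete_space}"
    and g :: 'a and n :: nat and p :: "nat \<Rightarrow> real" and w :: "nat \<Rightarrow> 'g \<Rightarrow> real"
  assumes onb: "orthonormal_basis \<Gamma> \<phi>"
    and w_pos: "\<And>i \<gamma>. i \<in> {1..n} \<Longrightarrow> \<gamma> \<in> \<Gamma> \<Longrightarrow> w i \<gamma> > 0"
  shows "Phi \<Gamma> \<phi> g n w p f
     = (\<Sum>\<^sub>\<infinity>\<gamma>\<in>\<Gamma>. ennreal (Mfun n (\<lambda>i. w i \<gamma>) p (inner g (\<phi> \<gamma>)) (inner f (\<phi> \<gamma>))))"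
proof -
  let ?h = "\<lambda>\<gamma>. (inner f (\<phi> \<gamma>) - inner g (\<phi> \<gamma>))\<^sup>2"
  let ?q = "\<lambda>i \<gamma>. ennreal (w i \<gamma> * \<bar>inner f (\<phi> \<gamma>)\<bar> powr p i)"
  have ps: "(?h has_sum (norm (f - g))\<^sup>2) \<Gamma>"
    using parseval[OF onb, of "f - g"] by (simp add: inner_diff_left)
  have n1: "ennreal ((norm (f - g))\<^sup>2) = (\<Sum>\<^sub>\<infinity>\<gamma>\<in>\<Gamma>. ennreal (?h \<gamma>))"
    using ennreal_infsum[of ?h \<Gamma>] ps by (simp add: has_sum_iff)
  have n2: "(\<Sum>i\<in>{1..n}. wnorm_pow \<Gamma> \<phi> (w i) (p i) f) = (\<Sum>\<^sub>\<infinity>\<gamma>\<in>\<Gamma>. \<Sum>i\<in>{1..n}. ?q i \<gamma>)"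
    unfolding wnorm_pow_def by (rule infsum_sum_ennreal[symmetric]) simp
  have "Phi \<Gamma> \<phi> g n w p f = (\<Sum>\<^sub>\<infinity>\<gamma>\<in>\<Gamma>. ennreal (?h \<gamma>) + (\<Sum>i\<in>{1..n}. ?q i \<gamma>))"
    unfolding Phi_def n1 n2
    by (rule infsum_add[OF ennsum ennsum, symmetric])
  also have "\<dots> = (\<Sum>\<^sub>\<infinity>\<gamma>\<in>\<Gamma>. ennreal (Mfun n (\<lambda>i. w i \<gamma>) p (inner g (\<phi> \<gamma>)) (inner f (\<phi> \<gamma>))))"
  proof (rule infsum_cong)
    fix \<gamma> assume \<gamma>: "\<gamma> \<in> \<Gamma>"
    have nn: "0 \<le> w i \<gamma> * \<bar>inner f (\<phi> \<gamma>)\<bar> powr p i" if "i \<in> {1..n}" for i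
      using w_pos[OF that \<gamma>] by simp
    have "(\<Sum>i\<in>{1..n}. ?q i \<gamma>) = ennreal (\<Sum>i\<in>{1..n}. w i \<gamma> * \<bar>inner f (\<phi> \<gamma>)\<bar> powr p i)"
      using nn by (rule sum_ennreal)
    moreover have "0 \<le> (\<Sum>i\<in>{1..n}. w i \<gamma> * \<bar>inner f (\<phi> \<gamma>)\<bar> powr p i)"
      using nn by (rule sum_nonneg)
    moreover note \<open>0 \<le> (\<Sum>i\<in>{1..n}. w i \<gamma> * \<bar>inner f (\<phi> \<gamma>)\<bar> powr p i)\<close>
    ultimately show "ennreal (?h \<gamma>) + (\<Sum>i\<in>{1..n}. ?q i \<gamma>)
        = ennreal (Mfun n (\<lambda>i. w i \<gamma>) p (inner g (\<phi> \<gamma>)) (inner f (\<phi> \<gamma>)))"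
      unfolding Mfun_alt using ennreal_plus[OF zero_le_power2 \<open>0 \<le> (\<Sum>i\<in>{1..n}. w i \<gamma> * \<bar>inner f (\<phi> \<gamma>)\<bar> powr p i)\<close>, of "inner f (\<phi> \<gamma>) - inner g (\<phi> \<gamma>)"]
      by (simp only:)
  qed
  finally show ?thesis .
qed

theorem lemma1p1:
  fixes \<Gamma> :: "'g set" and \<phi> :: "'g \<Rightarrow> 'a::{real_inner, complete_space}"
    and g :: 'a and n :: nat and p :: "nat \<Rightarrow> real" and w :: "nat \<Rightarrow> 'g \<Rightarrow> real"
  assumes onb: "orthonormal_basis \<Gamma> \<phi>"
    and p_range: "\<And>i. i \<in> {1..n} \<Longrightarrow> 1 \<le> p i \<and> p i \<le> 2"
    and w_pos: "\<And>i \<gamma>. i \<in> {1..n} \<Longrightarrow> \<gamma> \<in> \<Gamma> \<Longrightarrow> w i \<gamma> > 0"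
  shows "(\<lambda>\<gamma>. Smin n (\<lambda>i. w i \<gamma>) p (inner g (\<phi> \<gamma>)) *\<^sub>R \<phi> \<gamma>) summable_on \<Gamma>
     \<and> (\<forall>f. Phi \<Gamma> \<phi> g n w p
              (\<Sum>\<^sub>\<infinity>\<gamma>\<in>\<Gamma>. Smin n (\<lambda>i. w i \<gamma>) p (inner g (\<phi> \<gamma>)) *\<^sub>R \<phi> \<gamma>)
            \<le> Phi \<Gamma> \<phi> g n w p f)"
proof -
  have on: "ortho \<Gamma> \<phi>" using onb unfolding orthonormal_basis_def ortho_def by blast
  define c where "c \<gamma> = Smin n (\<lambda>i. w i \<gamma>) p (inner g (\<phi> \<gamma>))" for \<gamma>
  have sm: "(\<forall>z. Mfun n (\<lambda>i. w i \<gamma>) p (inner g (\<phi> \<gamma>)) (c \<gamma>) \<le> Mfun n (\<lambda>i. w i \<gamma>) p (inner g (\<phi> \<gamma>)) z)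
        \<and> \<bar>c \<gamma>\<bar> \<le> \<bar>inner g (\<phi> \<gamma>)\<bar>" if \<gamma>: "\<gamma> \<in> \<Gamma>" for \<gamma>
    unfolding c_def by (rule scalar_min) (use w_pos[OF _ \<gamma>] p_range in auto)
  have sq: "(\<lambda>\<gamma>. (c \<gamma>)\<^sup>2) summable_on \<Gamma>"
  proof (rule summable_on_comparison_test[OF bessel[OF on, of g]])
    fix \<gamma> assume "\<gamma> \<in> \<Gamma>"
    then show "(c \<gamma>)\<^sup>2 \<le> (inner g (\<phi> \<gamma>))\<^sup>2" using sm abs_le_square_iff by blast
  qed simp
  have summ: "(\<lambda>\<gamma>. c \<gamma> *\<^sub>R \<phi> \<gamma>) summable_on \<Gamma>"
    by (rule summable_coeffs[OF on sq])
  define fm where "fm = (\<Sum>\<^sub>\<infinity>\<gamma>\<in>\<Gamma>. c \<gamma> *\<^sub>R \<phi> \<gamma>)"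
  have cf: "inner fm (\<phi> \<gamma>) = c \<gamma>" if "\<gamma> \<in> \<Gamma>" for \<gamma>
    unfolding fm_def by (rule coeff[OF on summ that])
  have "Phi \<Gamma> \<phi> g n w p fm \<le> Phi \<Gamma> \<phi> g n w p f" for f
  proof -
    have "Phi \<Gamma> \<phi> g n w p fm
        = (\<Sum>\<^sub>\<infinity>\<gamma>\<in>\<Gamma>. ennreal (Mfun n (\<lambda>i. w i \<gamma>) p (inner g (\<phi> \<gamma>)) (inner fm (\<phi> \<gamma>))))"
      by (rule Phi_eq[OF onb w_pos])
    also have "\<dots> = (\<Sum>\<^sub>\<infinity>\<gamma>\<in>\<Gamma>. ennreal (Mfun n (\<lambda>i. w i \<gamma>) p (inner g (\<phi> \<gamma>)) (c \<gamma>)))"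
      by (rule infsum_cong) (simp add: cf)
    also have "\<dots> \<le> (\<Sum>\<^sub>\<infinity>\<gamma>\<in>\<Gamma>. ennreal (Mfun n (\<lambda>i. w i \<gamma>) p (inner g (\<phi> \<gamma>)) (inner f (\<phi> \<gamma>))))"
      by (rule infsum_mono[OF ennsum ennsum]) (use sm in \<open>auto intro: ennreal_leI\<close>)
    also have "\<dots> = Phi \<Gamma> \<phi> g n w p f"
      by (rule Phi_eq[OF onb w_pos, symmetric])
    finally show ?thesis .
  qed
  then show ?thesis using summ unfolding fm_def c_def by blast
qed

end
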